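(* Let $\alpha,\beta\in\mathbb R$ with $\alpha+\beta>0$, let $\sigma>0$ and $\gamma,\delta>0$. Set $$\gamma_0:=\begin{cases}0&\text{if }\alpha\ge\frac{1}{4\sigma},\\ -\alpha+\frac1{4\sigma}&\text{if }-\frac1{4\sigma}\le\alpha<\frac1{4\sigma},\\ 2\beta-2\sqrt{(\alpha+\beta)(\beta-\frac1{4\sigma})}&\text{if }\alpha<-\frac1{4\sigma}.\end{cases}$$ Then $\gamma_0\ge\max\{0,-\alpha+\frac1{4\sigma}\}$, and the following are equivalent: (i) $\dfrac{4\gamma\delta(1+\gamma\alpha)(1+\delta\beta)-(\gamma+\delta)^2}{2\gamma\delta^2(\alpha+\beta)}-\dfrac{\gamma}{2\sigma}>0$; (ii) $\frac1\gamma>\gamma_0$ and $\max\{0,\frac1\gamma+2\alpha-2\sqrt\Delta\}<\frac1\delta<\frac1\gamma+2\alpha+2\sqrt\Delta$, where $\Delta:=(\alpha+\beta)(\frac1\gamma+\alpha-\frac1{4\sigma})$. Consequently, there always exist $\gamma,\delta>0$ satisfying (i) and (ii). *)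

theory Defs
  imports Complex_Main
begin

definition gamma0 :: "real \<Rightarrow> real \<Rightarrow> real \<Rightarrow> real" where
  "gamma0 \<alpha> \<beta> \<sigma> =
     (if \<alpha> \<ge> 1 / (4 * \<sigma>) then 0
      else if - (1 / (4 * \<sigma>)) \<le> \<alpha> then - \<alpha> + 1 / (4 * \<sigma>)
      else 2 * \<beta> - 2 * sqrt ((\<alpha> + \<beta>) * (\<beta> - 1 / (4 * \<sigma>))))"

definition cond_i :: "real \<Rightarrow> real \<Rightarrow> real \<Rightarrow> real \<Rightarrow> real \<Rightarrow> bool" where
  "cond_i \<alpha> \<beta> \<sigma> \<gamma> \<delta> \<longleftrightarrow>
     (4 * \<gamma> * \<delta> * (1 + \<gamma> * \<alpha>) * (1 + \<delta> * \<beta>) - (\<gamma> + \<delta>)^2)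
       / (2 * \<gamma> * \<delta>^2 * (\<alpha> + \<beta>)) - \<gamma> / (2 * \<sigma>) > 0"

definition Delta :: "real \<Rightarrow> real \<Rightarrow> real \<Rightarrow> real \<Rightarrow> real" where
  "Delta \<alpha> \<beta> \<sigma> \<gamma> = (\<alpha> + \<beta>) * (1 / \<gamma> + \<alpha> - 1 / (4 * \<sigma>))"

definition cond_ii :: "real \<Rightarrow> real \<Rightarrow> real \<Rightarrow> real \<Rightarrow> real \<Rightarrow> bool" where
  "cond_ii \<alpha> \<beta> \<sigma> \<gamma> \<delta> \<longleftrightarrow>
     1 / \<gamma> > gamma0 \<alpha> \<beta> \<sigma> \<and>
     max 0 (1 / \<gamma> + 2 * \<alpha> - 2 * sqrt (Delta \<alpha> \<beta> \<sigma> \<gamma>)) < 1 / \<delta> \<and>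
     1 / \<delta> < 1 / \<gamma> + 2 * \<alpha> + 2 * sqrt (Delta \<alpha> \<beta> \<sigma> \<gamma>)"

end

theory Submission
  imports Defs
begin

lemma condi_iff:
  fixes \<alpha> \<beta> \<sigma> \<gamma> \<delta> :: real
  assumes s: "\<alpha> + \<beta> > 0" and sg: "\<sigma> > 0" and g: "\<gamma> > 0" and d: "\<delta> > 0"
  shows "cond_i \<alpha> \<beta> \<sigma> \<gamma> \<delta> \<longleftrightarrow>
    (1/\<delta> - (1/\<gamma> + 2*\<alpha>))^2 < 4 * Delta \<alpha> \<beta> \<sigma> \<gamma>"
proof -
  define N where "N = 4 * \<gamma> * \<delta> * (1 + \<gamma> * \<alpha>) * (1 + \<delta> * \<beta>) - (\<gamma> + \<delta>)^2"
  have pos: "2 * \<gamma> * \<delta>^2 * (\<alpha> + \<beta>) > 0" using s g d by simp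
  have "cond_i \<alpha> \<beta> \<sigma> \<gamma> \<delta> \<longleftrightarrow> N / (2 * \<gamma> * \<delta>^2 * (\<alpha> + \<beta>)) > \<gamma> / (2 * \<sigma>)"
    unfolding cond_i_def N_def by simp
  also have "\<dots> \<longleftrightarrow> N * (2*\<sigma>) > \<gamma> * (2 * \<gamma> * \<delta>^2 * (\<alpha> + \<beta>))"
    using pos sg by (simp add: divide_simps mult.commute)
  also have "\<dots> \<longleftrightarrow> N * \<sigma> > \<gamma>^2 * \<delta>^2 * (\<alpha> + \<beta>)"
  proof -
    have "\<gamma> * (2 * \<gamma> * \<delta>^2 * (\<alpha> + \<beta>)) = 2 * (\<gamma>^2 * \<delta>^2 * (\<alpha> + \<beta>))"
      by (simp add: power2_eq_square algebra_simps)
    moreover have "N * (2*\<sigma>) = 2 * (N * \<sigma>)" by simp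
    ultimately show ?thesis by linarith
  qed
  also have "\<dots> \<longleftrightarrow> (1/\<delta> - (1/\<gamma> + 2*\<alpha>))^2 < 4 * Delta \<alpha> \<beta> \<sigma> \<gamma>"
  proof -
    have e: "(4 * Delta \<alpha> \<beta> \<sigma> \<gamma> - (1/\<delta> - (1/\<gamma> + 2*\<alpha>))^2) * (\<gamma>^2 * \<delta>^2 * \<sigma>)
       = N * \<sigma> - \<gamma>^2 * \<delta>^2 * (\<alpha> + \<beta>)"
      unfolding N_def Delta_def using g d sg
      by (simp add: field_simps power2_eq_square)
    have p2: "\<gamma>^2 * \<delta>^2 * \<sigma> > 0" using g d sg by simp
    show ?thesis
    proof
      assume "N * \<sigma> > \<gamma>^2 * \<delta>^2 * (\<alpha> + \<beta>)"
      then have "(4 * Delta \<alpha> \<beta> \<sigma> \<gamma> - (1/\<delta> - (1/\<gamma> + 2*\<alpha>))^2) * (\<gamma>^2 * \<delta>^2 * \<sigma>) > 0"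
        using e by simp
      then show "(1/\<delta> - (1/\<gamma> + 2*\<alpha>))^2 < 4 * Delta \<alpha> \<beta> \<sigma> \<gamma>"
        using p2 by (simp add: zero_less_mult_iff)
    next
      assume "(1/\<delta> - (1/\<gamma> + 2*\<alpha>))^2 < 4 * Delta \<alpha> \<beta> \<sigma> \<gamma>"
      then have "(4 * Delta \<alpha> \<beta> \<sigma> \<gamma> - (1/\<delta> - (1/\<gamma> + 2*\<alpha>))^2) * (\<gamma>^2 * \<delta>^2 * \<sigma>) > 0"
        using p2 by simp
      then show "N * \<sigma> > \<gamma>^2 * \<delta>^2 * (\<alpha> + \<beta>)" using e by simp
    qed
  qed
  finally show ?thesis .
qed

lemma sq_lt_iff:
  fixes u D :: real
  shows "u^2 < 4 * D \<longleftrightarrow> (- 2 * sqrt D < u \<and> u < 2 * sqrt D)"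
proof -
  have "u^2 < 4 * D \<longleftrightarrow> sqrt (u^2) < sqrt (4 * D)" by (rule real_sqrt_less_iff[symmetric])
  also have "\<dots> \<longleftrightarrow> \<bar>u\<bar> < 2 * sqrt D" by (simp add: real_sqrt_mult)
  finally show ?thesis by auto
qed

lemma lemC:
  fixes \<alpha> \<beta> \<sigma> g :: real
  assumes s: "\<alpha> + \<beta> > 0" and sg: "\<sigma> > 0"
    and D: "(\<alpha> + \<beta>) * (g + \<alpha> - 1 / (4 * \<sigma>)) > 0"
    and g0: "g > 0" and U: "g + 2*\<alpha> + 2 * sqrt ((\<alpha> + \<beta>) * (g + \<alpha> - 1 / (4 * \<sigma>))) > 0"
  shows "g > gamma0 \<alpha> \<beta> \<sigma>"
proof -
  define c where "c = 1 / (4 * \<sigma>)"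
  have c: "c > 0" using sg by (simp add: c_def)
  have h: "g + \<alpha> - c > 0" using D s c_def by (simp add: zero_less_mult_iff)
  show ?thesis
  proof (cases "\<alpha> \<ge> c")
    case True
    then show ?thesis using g0 unfolding gamma0_def c_def[symmetric] by simp
  next
    case F1: False
    show ?thesis
    proof (cases "- c \<le> \<alpha>")
      case True
      then show ?thesis using h F1 unfolding gamma0_def c_def[symmetric] by simp
    next
      case False
      then have a: "\<alpha> < - c" by simp
      define x where "x = sqrt (\<alpha> + \<beta>)"
      define y where "y = sqrt (\<beta> - c)"
      define z where "z = sqrt (g + \<alpha> - c)"
      have x2: "x^2 = \<alpha> + \<beta>" using s x_def by simp
      have bc: "\<beta> - c > \<alpha> + \<beta>" using a by simp
      have y2: "y^2 = \<beta> - c" using bc s y_def by simp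
      have hh: "g + \<alpha> - c \<ge> 0" using h by linarith
      have z2: "z^2 = g + \<alpha> - c" unfolding z_def using hh by simp
      have x0: "x > 0" using s x_def by simp
      have z0: "z \<ge> 0" unfolding z_def using hh by simp
      have yx: "y > x" using bc unfolding x_def y_def by simp
      have sxy: "sqrt ((\<alpha> + \<beta>) * (\<beta> - c)) = x * y" by (simp add: x_def y_def real_sqrt_mult)
      have sxz: "sqrt ((\<alpha> + \<beta>) * (g + \<alpha> - c)) = x * z" by (simp add: x_def z_def real_sqrt_mult)
      have "g + 2*\<alpha> + 2*x*z > 0" using U sxz unfolding c_def by simp
      then have "(z + x)^2 > y^2" using x2 y2 z2 by (simp add: power2_eq_square algebra_simps)
      then have "z + x > y" using x0 z0 by (smt (verit) power_mono)
      then have "z^2 > (y - x)^2" using yx by (smt (verit) power_strict_mono zero_less_numeral)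
      then have "g > 2 * \<beta> - 2 * (x * y)" using x2 y2 z2 by (simp add: power2_eq_square algebra_simps)
      then show ?thesis using a F1 unfolding gamma0_def c_def[symmetric] sxy by simp
    qed
  qed
qed

theorem lemma4p4:
  fixes \<alpha> \<beta> \<sigma> :: real
  assumes "\<alpha> + \<beta> > 0" and "\<sigma> > 0"
  shows "gamma0 \<alpha> \<beta> \<sigma> \<ge> max 0 (- \<alpha> + 1 / (4 * \<sigma>))
    \<and> (\<forall>\<gamma> \<delta>. \<gamma> > 0 \<longrightarrow> \<delta> > 0 \<longrightarrow> (cond_i \<alpha> \<beta> \<sigma> \<gamma> \<delta> \<longleftrightarrow> cond_ii \<alpha> \<beta> \<sigma> \<gamma> \<delta>))
    \<and> (\<exists>\<gamma> \<delta>. \<gamma> > 0 \<and> \<delta> > 0 \<and> cond_i \<alpha> \<beta> \<sigma> \<gamma> \<delta> \<and> cond_ii \<alpha> \<beta> \<sigma> \<gamma> \<delta>)"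
proof -
  note s = assms(1) and sg = assms(2)
  define c where "c = 1 / (4 * \<sigma>)"
  have c: "c > 0" using sg by (simp add: c_def)
  have P1: "gamma0 \<alpha> \<beta> \<sigma> \<ge> max 0 (- \<alpha> + c)"
  proof (cases "\<alpha> \<ge> c")
    case True
    then show ?thesis unfolding gamma0_def c_def[symmetric] by simp
  next
    case F1: False
    show ?thesis
    proof (cases "- c \<le> \<alpha>")
      case True
      then show ?thesis using F1 unfolding gamma0_def c_def[symmetric] by simp
    next
      case False
      then have a: "\<alpha> < - c" by simp
      define x where "x = sqrt (\<alpha> + \<beta>)"
      define y where "y = sqrt (\<beta> - c)"
      have x2: "x^2 = \<alpha> + \<beta>" using s x_def by simp
      have bc: "\<beta> - c > \<alpha> + \<beta>" using a by simp
      have y2: "y^2 = \<beta> - c" using bc s y_def by simp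
      have sxy: "sqrt ((\<alpha> + \<beta>) * (\<beta> - c)) = x * y" by (simp add: x_def y_def real_sqrt_mult)
      have e: "2 * \<beta> - 2 * (x * y) - (- \<alpha> + c) = (x - y)^2"
        using x2 y2 by (simp add: power2_eq_square algebra_simps)
      have "(x - y)^2 \<ge> 0" by simp
      then have "2 * \<beta> - 2 * (x * y) \<ge> - \<alpha> + c" using e by linarith
      then have "2 * \<beta> - 2 * (x * y) \<ge> max 0 (- \<alpha> + c)" using a c by simp
      then show ?thesis using a F1 unfolding gamma0_def c_def[symmetric] sxy by simp
    qed
  qed
  have P2: "cond_i \<alpha> \<beta> \<sigma> \<gamma> \<delta> \<longleftrightarrow> cond_ii \<alpha> \<beta> \<sigma> \<gamma> \<delta>" if g: "\<gamma> > 0" and d: "\<delta> > 0" for \<gamma> \<delta>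
  proof -
    define D where "D = Delta \<alpha> \<beta> \<sigma> \<gamma>"
    have d0: "1/\<delta> > 0" using d by simp
    have i: "cond_i \<alpha> \<beta> \<sigma> \<gamma> \<delta> \<longleftrightarrow>
       (- 2 * sqrt D < 1/\<delta> - (1/\<gamma> + 2*\<alpha>) \<and> 1/\<delta> - (1/\<gamma> + 2*\<alpha>) < 2 * sqrt D)"
      using condi_iff[OF s sg g d] sq_lt_iff unfolding D_def by simp
    show ?thesis
    proof
      assume ci: "cond_i \<alpha> \<beta> \<sigma> \<gamma> \<delta>"
      then have I: "- 2 * sqrt D < 1/\<delta> - (1/\<gamma> + 2*\<alpha>)" "1/\<delta> - (1/\<gamma> + 2*\<alpha>) < 2 * sqrt D"
        using i by auto
      then have "sqrt D > 0" by linarith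
      then have "D > 0" by simp
      have gg: "1/\<gamma> > 0" using g by simp
      then have "1/\<gamma> > gamma0 \<alpha> \<beta> \<sigma>"
        using lemC[OF s sg, of "1/\<gamma>"] I d0 gg \<open>D > 0\<close> unfolding D_def Delta_def by linarith
      then show "cond_ii \<alpha> \<beta> \<sigma> \<gamma> \<delta>" unfolding cond_ii_def D_def[symmetric]
        using I d0 by simp
    next
      assume "cond_ii \<alpha> \<beta> \<sigma> \<gamma> \<delta>"
      then show "cond_i \<alpha> \<beta> \<sigma> \<gamma> \<delta>" unfolding i unfolding cond_ii_def D_def[symmetric]
        by simp
    qed
  qed
  define g where "g = \<bar>(\<alpha> + \<beta>) * c - \<alpha> * \<beta>\<bar> / (\<alpha> + \<beta>) + 1"
  have "\<bar>(\<alpha> + \<beta>) * c - \<alpha> * \<beta>\<bar> / (\<alpha> + \<beta>) \<ge> 0" using s by simp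
  then have g0: "g > 0" unfolding g_def by linarith
  have "g * (\<alpha> + \<beta>) > (\<alpha> + \<beta>) * c - \<alpha> * \<beta>"
  proof -
    have "g * (\<alpha> + \<beta>) = \<bar>(\<alpha> + \<beta>) * c - \<alpha> * \<beta>\<bar> + (\<alpha> + \<beta>)"
      using s by (simp add: g_def field_simps)
    then show ?thesis using s by linarith
  qed
  then have key: "(1/(1/g) - (1/(1/g) + 2*\<alpha>))^2 < 4 * Delta \<alpha> \<beta> \<sigma> (1/g)"
    unfolding Delta_def c_def[symmetric] by (simp add: power2_eq_square algebra_simps)
  have "cond_i \<alpha> \<beta> \<sigma> (1/g) (1/g)"
    using condi_iff[OF s sg, of "1/g" "1/g"] g0 key by simp
  moreover have "cond_ii \<alpha> \<beta> \<sigma> (1/g) (1/g)"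
    using P2[of "1/g" "1/g"] g0 calculation by simp
  ultimately have P3: "\<exists>\<gamma> \<delta>. \<gamma> > 0 \<and> \<delta> > 0 \<and> cond_i \<alpha> \<beta> \<sigma> \<gamma> \<delta> \<and> cond_ii \<alpha> \<beta> \<sigma> \<gamma> \<delta>"
    using g0 by (metis zero_less_divide_1_iff)
  show ?thesis using P1 P2 P3 unfolding c_def by blast
qed

end
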